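(* Let $\nu_0,\nu_1$ be nonnegative (not necessarily normalized) densities on $\mathbb{R}^d$, let $\sigma:[0,1]\to(0,\infty)$ be differentiable, $\alpha>0$, and $\Psi:\mathbb{R}\to[0,+\infty]$. The regularized unbalanced optimal transport (RUOT) problem $$\inf_{(p,\boldsymbol b,g)}\int_0^1\!\!\int_{\mathbb{R}^d}\Big[\tfrac12\|\boldsymbol b(\boldsymbol x,t)\|_2^2+\alpha\Psi(g(\boldsymbol x,t))\Big]p(\boldsymbol x,t)\,\mathrm{d}\boldsymbol x\,\mathrm{d}t,$$ over triples with $p(\cdot,0)=\nu_0$, $p(\cdot,1)=\nu_1$, $p$ absolutely continuous, $\lim_{|\boldsymbol x|\to\infty}p(\boldsymbol x,t)=0$, and $$\partial_t p=-\nabla_{\boldsymbol x}\cdot(p\boldsymbol b)+\tfrac12\sigma^2(t)\Delta_{\boldsymbol x}p+gp,$$ is equivalent to the problem $$\inf_{(p,\boldsymbol v,g)}\int_0^1\!\!\int_{\mathbb{R}^d}\Big[\tfrac12\|\boldsymbol v\|_2^2+\tfrac{\sigma^4(t)}{8}\|\nabla_{\boldsymbol x}\log p\|_2^2-\tfrac{\sigma^2(t)}{2}(1+\log p)\,g-\tfrac12\tfrac{\mathrm{d}\sigma^2(t)}{\mathrm{d}t}\log p+\alpha\Psi(g)\Big]p\,\mathrm{d}\boldsymbol x\,\mathrm{d}t$$ over triples $(p,\boldsymbol v,g)$ with the same boundary conditions $p(\cdot,0)=\nu_0$, $p(\cdot,1)=\nu_1$, $p$ absolutely continuous, $\lim_{|\boldsymbol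 x|\to\infty}p=0$, and $$\partial_t p=-\nabla_{\boldsymbol x}\cdot(p\boldsymbol v)+gp,$$ in the following sense: the map $(p,\boldsymbol b,g)\mapsto(p,\boldsymbol v,g)$ with $\boldsymbol v=\boldsymbol b-\tfrac12\sigma^2(t)\nabla_{\boldsymbol x}\log p$ is a bijection between the admissible sets, and the two objective values differ by the constant $\tfrac12\big(\sigma^2(1)H(\nu_1)-\sigma^2(0)H(\nu_0)\big)$, where $H(q)=\int_{\mathbb{R}^d}q\log q\,\mathrm{d}\boldsymbol x$; in particular the minimizers correspond.
   Context: All functions are assumed smooth enough (and decaying at infinity) for the integrations by parts to be valid; $\|\cdot\|_2$ is the Euclidean norm; $\Delta_{\boldsymbol x}$ is the Laplacian in $\boldsymbol x$. $\boldsymbol b,\boldsymbol v:\mathbb{R}^d\times[0,1]\to\mathbb{R}^d$ are vector fields and $g:\mathbb{R}^d\times[0,1]\to\mathbb{R}$ is a scalar growth/death rate. *)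

theory Defs
  imports "HOL-Analysis.Analysis"
begin

definition pd :: "'a::euclidean_space \<Rightarrow> ('a \<Rightarrow> real) \<Rightarrow> 'a \<Rightarrow> real" where
  "pd i f x = deriv (\<lambda>s. f (x + s *\<^sub>R i)) 0"

definition grad :: "('a::euclidean_space \<Rightarrow> real) \<Rightarrow> 'a \<Rightarrow> 'a" where
  "grad f x = (\<Sum>i\<in>Basis. pd i f x *\<^sub>R i)"

definition divg :: "('a::euclidean_space \<Rightarrow> 'a) \<Rightarrow> 'a \<Rightarrow> real" where
  "divg F x = (\<Sum>i\<in>Basis. pd i (\<lambda>y. F y \<bullet> i) x)"

definition lap :: "('a::euclidean_space \<Rightarrow> real) \<Rightarrow> 'a \<Rightarrow> real" where
  "lap f x = (\<Sum>i\<in>Basis. pd i (pd i f) x)"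

definition dt :: "('a \<Rightarrow> real \<Rightarrow> real) \<Rightarrow> 'a \<Rightarrow> real \<Rightarrow> real" where
  "dt p x t = vector_derivative (\<lambda>s. p x s) (at t within {0..1})"

definition dsig2 :: "(real \<Rightarrow> real) \<Rightarrow> real \<Rightarrow> real" where
  "dsig2 \<sigma> t = vector_derivative (\<lambda>s. (\<sigma> s)\<^sup>2) (at t within {0..1})"

definition score :: "('a::euclidean_space \<Rightarrow> real \<Rightarrow> real) \<Rightarrow> 'a \<Rightarrow> real \<Rightarrow> 'a" where
  "score p x t = grad (\<lambda>y. ln (p y t)) x"

definition abs_cont_on :: "real set \<Rightarrow> (real \<Rightarrow> real) \<Rightarrow> bool" where
  "abs_cont_on S f \<longleftrightarrow> (\<forall>\<epsilon>>0. \<exists>\<delta>>0. \<forall>(n::nat) a b.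
      (\<forall>k<n. a k \<in> S \<and> b k \<in> S \<and> a k \<le> b k) \<and> (\<forall>k. Suc k < n \<longrightarrow> b k \<le> a (Suc k)) \<and>
      (\<Sum>k<n. b k - a k) < \<delta> \<longrightarrow> (\<Sum>k<n. \<bar>f (b k) - f (a k)\<bar>) < \<epsilon>)"

definition entropy :: "('a::euclidean_space \<Rightarrow> real) \<Rightarrow> real" where
  "entropy q = (LINT x|lborel. q x * ln (q x))"

section \<open>Standing regularity class
  ("smooth enough, decaying at infinity, so that the integrations by parts are valid")\<close>

definition regular :: "(real \<Rightarrow> real) \<Rightarrow> ('a::euclidean_space \<Rightarrow> real \<Rightarrow> real) \<Rightarrow>
    ('a \<Rightarrow> real \<Rightarrow> 'a) \<Rightarrow> ('a \<Rightarrow> real \<Rightarrow> real) \<Rightarrow> bool" where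
  "regular \<sigma> p w g \<longleftrightarrow>
    (\<forall>t\<in>{0..1}.
      \<comment> \<open>positivity (so that log p makes sense) and smoothness\<close>
      (\<forall>x. p x t > 0) \<and>
      (\<forall>x. (\<lambda>s. p x s) differentiable (at t within {0..1})) \<and>
      (\<forall>x. (\<lambda>y. p y t) differentiable (at x)) \<and>
      (\<forall>i\<in>Basis. \<forall>x. (\<lambda>y. pd i (\<lambda>z. p z t) y) differentiable (at x)) \<and>
      (\<forall>x. (\<lambda>y. p y t *\<^sub>R w y t) differentiable (at x)) \<and>
      \<comment> \<open>spatial integrability of all terms appearing\<close>
      integrable lborel (\<lambda>x. p x t * (norm (w x t))\<^sup>2) \<and>
      integrable lborel (\<lambda>x. p x t * (norm (score p x t))\<^sup>2) \<and>
      integrable lborel (\<lambda>x. p x t * (w x t \<bullet> score p x t)) \<and>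
      integrable lborel (\<lambda>x. p x t * ln (p x t)) \<and>
      integrable lborel (\<lambda>x. g x t * p x t) \<and>
      integrable lborel (\<lambda>x. g x t * p x t * ln (p x t)) \<and>
      integrable lborel (\<lambda>x. dt p x t * (1 + ln (p x t))) \<and>
      integrable lborel (\<lambda>x. divg (\<lambda>y. p y t *\<^sub>R w y t) x * (1 + ln (p x t))) \<and>
      integrable lborel (\<lambda>x. lap (\<lambda>y. p y t) x * (1 + ln (p x t))) \<and>
      \<comment> \<open>validity of the spatial integrations by parts (vanishing boundary terms)\<close>
      (LINT x|lborel. divg (\<lambda>y. p y t *\<^sub>R w y t) x * (1 + ln (p x t)))
        = - (LINT x|lborel. p x t * (w x t \<bullet> score p x t)) \<and>
      (LINT x|lborel. lap (\<lambda>y. p y t) x * (1 + ln (p x t)))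
        = - (LINT x|lborel. p x t * (norm (score p x t))\<^sup>2) \<and>
      \<comment> \<open>differentiation of the entropy under the integral sign\<close>
      ((\<lambda>s. LINT x|lborel. p x s * ln (p x s)) has_real_derivative
          (LINT x|lborel. dt p x t * (1 + ln (p x t)))) (at t within {0..1})) \<and>
    \<comment> \<open>integrability in time of the spatial integrals\<close>
    set_integrable lborel {0..1} (\<lambda>t. LINT x|lborel. p x t * (norm (w x t))\<^sup>2) \<and>
    set_integrable lborel {0..1} (\<lambda>t. LINT x|lborel. p x t * (norm (score p x t))\<^sup>2) \<and>
    set_integrable lborel {0..1} (\<lambda>t. LINT x|lborel. p x t * (w x t \<bullet> score p x t)) \<and>
    set_integrable lborel {0..1} (\<lambda>t. LINT x|lborel. g x t * p x t * (1 + ln (p x t))) \<and>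
    set_integrable lborel {0..1} (\<lambda>t. dsig2 \<sigma> t * (LINT x|lborel. p x t * ln (p x t)))"

definition common_adm :: "('a::euclidean_space \<Rightarrow> real) \<Rightarrow> ('a \<Rightarrow> real) \<Rightarrow>
    ('a \<Rightarrow> real \<Rightarrow> real) \<Rightarrow> bool" where
  "common_adm \<nu>0 \<nu>1 p \<longleftrightarrow>
     (\<forall>x. p x 0 = \<nu>0 x) \<and> (\<forall>x. p x 1 = \<nu>1 x) \<and>
     (\<forall>x. abs_cont_on {0..1} (\<lambda>t. p x t)) \<and>
     (\<forall>t\<in>{0..1}. ((\<lambda>x. p x t) \<longlongrightarrow> 0) at_infinity)"

definition adm_ruot :: "(real \<Rightarrow> real) \<Rightarrow> ('a::euclidean_space \<Rightarrow> real) \<Rightarrow> ('a \<Rightarrow> real) \<Rightarrow>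
    (('a \<Rightarrow> real \<Rightarrow> real) \<times> ('a \<Rightarrow> real \<Rightarrow> 'a) \<times> ('a \<Rightarrow> real \<Rightarrow> real)) set" where
  "adm_ruot \<sigma> \<nu>0 \<nu>1 = {(p, b, g). common_adm \<nu>0 \<nu>1 p \<and> regular \<sigma> p b g \<and>
     (\<forall>t\<in>{0..1}. \<forall>x. dt p x t =
        - divg (\<lambda>y. p y t *\<^sub>R b y t) x + (1/2) * (\<sigma> t)\<^sup>2 * lap (\<lambda>y. p y t) x + g x t * p x t)}"

definition adm_ce :: "(real \<Rightarrow> real) \<Rightarrow> ('a::euclidean_space \<Rightarrow> real) \<Rightarrow> ('a \<Rightarrow> real) \<Rightarrow>
    (('a \<Rightarrow> real \<Rightarrow> real) \<times> ('a \<Rightarrow> real \<Rightarrow> 'a) \<times> ('a \<Rightarrow> real \<Rightarrow> real)) set" where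
  "adm_ce \<sigma> \<nu>0 \<nu>1 = {(p, v, g). common_adm \<nu>0 \<nu>1 p \<and> regular \<sigma> p v g \<and>
     (\<forall>t\<in>{0..1}. \<forall>x. dt p x t = - divg (\<lambda>y. p y t *\<^sub>R v y t) x + g x t * p x t)}"

definition psi_part :: "real \<Rightarrow> (real \<Rightarrow> ennreal) \<Rightarrow> ('a::euclidean_space \<Rightarrow> real \<Rightarrow> real) \<Rightarrow>
    ('a \<Rightarrow> real \<Rightarrow> real) \<Rightarrow> ereal" where
  "psi_part \<alpha> \<Psi> p g = enn2ereal (ennreal \<alpha> *
     (\<integral>\<^sup>+ t\<in>{0..1}. (\<integral>\<^sup>+ x. \<Psi> (g x t) * ennreal (p x t) \<partial>lborel) \<partial>lborel))"

definition J_ruot :: "real \<Rightarrow> (real \<Rightarrow> ennreal) \<Rightarrow>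
    (('a::euclidean_space \<Rightarrow> real \<Rightarrow> real) \<times> ('a \<Rightarrow> real \<Rightarrow> 'a) \<times> ('a \<Rightarrow> real \<Rightarrow> real)) \<Rightarrow> ereal" where
  "J_ruot \<alpha> \<Psi> z = (case z of (p, b, g) \<Rightarrow>
     ereal (LINT t:{0..1}|lborel. LINT x|lborel. (1/2) * (norm (b x t))\<^sup>2 * p x t)
     + psi_part \<alpha> \<Psi> p g)"

definition J_ce :: "(real \<Rightarrow> real) \<Rightarrow> real \<Rightarrow> (real \<Rightarrow> ennreal) \<Rightarrow>
    (('a::euclidean_space \<Rightarrow> real \<Rightarrow> real) \<times> ('a \<Rightarrow> real \<Rightarrow> 'a) \<times> ('a \<Rightarrow> real \<Rightarrow> real)) \<Rightarrow> ereal" where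
  "J_ce \<sigma> \<alpha> \<Psi> z = (case z of (p, v, g) \<Rightarrow>
     ereal (LINT t:{0..1}|lborel. LINT x|lborel.
        ((1/2) * (norm (v x t))\<^sup>2
         + (\<sigma> t)^4 / 8 * (norm (score p x t))\<^sup>2
         - (\<sigma> t)\<^sup>2 / 2 * (1 + ln (p x t)) * g x t
         - (1/2) * dsig2 \<sigma> t * ln (p x t)) * p x t)
     + psi_part \<alpha> \<Psi> p g)"

definition to_v :: "(real \<Rightarrow> real) \<Rightarrow>
    (('a::euclidean_space \<Rightarrow> real \<Rightarrow> real) \<times> ('a \<Rightarrow> real \<Rightarrow> 'a) \<times> ('a \<Rightarrow> real \<Rightarrow> real)) \<Rightarrow>
    (('a \<Rightarrow> real \<Rightarrow> real) \<times> ('a \<Rightarrow> real \<Rightarrow> 'a) \<times> ('a \<Rightarrow> real \<Rightarrow> real))" where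
  "to_v \<sigma> z = (case z of (p, b, g) \<Rightarrow>
     (p, \<lambda>x t. b x t - ((1/2) * (\<sigma> t)\<^sup>2) *\<^sub>R score p x t, g))"

end

theory Submission imports Defs begin

lemma pd_eq:
  assumes "(f has_derivative f') (at x)"
  shows "pd i f x = f' i"
proof -
  have d1: "((\<lambda>s::real. x + s *\<^sub>R i) has_derivative (\<lambda>s. s *\<^sub>R i)) (at 0)"
    by (auto intro!: derivative_eq_intros)
  have d2: "(f has_derivative f') (at (x + 0 *\<^sub>R i))" using assms by simp
  have "((\<lambda>s. f (x + s *\<^sub>R i)) has_derivative (\<lambda>s. f' (s *\<^sub>R i))) (at 0)"
    using has_derivative_compose[OF d1 d2] by simp
  moreover have "(\<lambda>s. f' (s *\<^sub>R i)) = (*) (f' i)"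
    using has_derivative_linear[OF assms] by (auto simp: linear_scale)
  ultimately have "((\<lambda>s. f (x + s *\<^sub>R i)) has_field_derivative f' i) (at 0)"
    by (simp add: has_field_derivative_def)
  thus ?thesis unfolding pd_def by (rule DERIV_imp_deriv)
qed

lemma set_integrable_cont_mult:
  fixes f h :: "real \<Rightarrow> real"
  assumes f: "set_integrable lborel {0..1} f" and h: "continuous_on {0..1} h"
  shows "set_integrable lborel {0..1} (\<lambda>t. h t * f t)"
proof -
  obtain B where B: "\<And>t. t \<in> {0..1} \<Longrightarrow> norm (h t) \<le> B"
    using compact_imp_bounded[OF compact_continuous_image[OF h compact_Icc]]
    by (force simp: bounded_iff)
  have m1: "(\<lambda>t. indicator {0..1} t *\<^sub>R h t) \<in> borel_measurable lborel"
    using borel_measurable_continuous_on_indicator[OF _ h] by simp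
  have fi: "integrable lborel (\<lambda>t. indicator {0..1} t *\<^sub>R f t)"
    using f by (simp add: set_integrable_def)
  have m2: "(\<lambda>t. indicator {0..1} t *\<^sub>R f t) \<in> borel_measurable lborel"
    using fi by auto
  have eq: "(\<lambda>t. indicator {0..1} t *\<^sub>R (h t * f t)) = (\<lambda>t. (indicator {0..1} t *\<^sub>R h t) * (indicator {0..1} t *\<^sub>R f t))"
    by (auto simp: indicator_def)
  show ?thesis unfolding set_integrable_def eq
  proof (rule Bochner_Integration.integrable_bound[of _ "\<lambda>t. B * (indicator {0..1} t *\<^sub>R f t)"])
    show "integrable lborel (\<lambda>t. B * (indicator {0..1} t *\<^sub>R f t))" using fi by simp
    show "(\<lambda>t. (indicator {0..1} t *\<^sub>R h t) * (indicator {0..1} t *\<^sub>R f t)) \<in> borel_measurable lborel"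
      using m1 m2 by measurable
    show "AE t in lborel. norm ((indicator {0..1} t *\<^sub>R h t) * (indicator {0..1} t *\<^sub>R f t)) \<le> norm (B * (indicator {0..1} t *\<^sub>R f t))"
    proof (rule AE_I2)
      fix t show "norm ((indicator {0..1} t *\<^sub>R h t) * (indicator {0..1} t *\<^sub>R f t)) \<le> norm (B * (indicator {0..1} t *\<^sub>R f t))"
      proof (cases "t \<in> {0..1}")
        case True
        then have "\<bar>h t\<bar> \<le> B" using B by auto
        then have "\<bar>h t\<bar> * \<bar>f t\<bar> \<le> \<bar>B\<bar> * \<bar>f t\<bar>" by (intro mult_right_mono) auto
        then show ?thesis using True by (simp add: abs_mult)
      qed simp
    qed
  qed
qed

lemma grad_inner: "i \<in> Basis \<Longrightarrow> grad f y \<bullet> i = pd i f y"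
  by (simp add: grad_def inner_sum_left inner_Basis if_distrib cong: if_cong)

lemma score_eq:
  fixes q :: "'a::euclidean_space \<Rightarrow> real"
  assumes pos: "\<forall>y. q y > 0" and d: "\<forall>y. q differentiable (at y)"
  shows "(\<lambda>y. q y *\<^sub>R grad (\<lambda>z. ln (q z)) y) = grad q"
proof
  fix y
  obtain q' where hq: "(q has_derivative q') (at y)" using d unfolding differentiable_def by blast
  have hl: "(ln has_derivative (*) (1 / q y)) (at (q y))"
    using DERIV_ln[OF pos[rule_format, of y]] by (simp add: has_field_derivative_def inverse_eq_divide)
  have "((\<lambda>z. ln (q z)) has_derivative (\<lambda>h. (1 / q y) * q' h)) (at y)"
    using has_derivative_compose[OF hq hl] by simp
  then have "\<And>j. pd j (\<lambda>z. ln (q z)) y = (1 / q y) * q' j" by (rule pd_eq)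
  moreover have "\<And>j. pd j q y = q' j" using hq by (rule pd_eq)
  ultimately show "q y *\<^sub>R grad (\<lambda>z. ln (q z)) y = grad q y"
    using pos[rule_format, of y] by (simp add: grad_def scaleR_sum_right)
qed

lemma divg_grad:
  assumes "\<forall>i\<in>Basis. \<forall>x. pd i q differentiable (at x)"
  shows "divg (grad q) x = lap q x"
  unfolding divg_def lap_def
  by (rule sum.cong) (auto simp: grad_inner)

lemma grad_differentiable:
  assumes "\<forall>i\<in>Basis. \<forall>x. pd i q differentiable (at x)"
  shows "grad q differentiable (at x)"
  unfolding grad_def using assms
  by (auto intro!: differentiable_sum differentiable_scaleR)

lemma divg_lin:
  fixes F G :: "'a::euclidean_space \<Rightarrow> 'a"
  assumes "F differentiable (at x)" "G differentiable (at x)"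
  shows "divg (\<lambda>y. F y + c *\<^sub>R G y) x = divg F x + c * divg G x"
proof -
  obtain F' where hF: "(F has_derivative F') (at x)" using assms(1) unfolding differentiable_def by blast
  obtain G' where hG: "(G has_derivative G') (at x)" using assms(2) unfolding differentiable_def by blast
  have "\<And>i. pd i (\<lambda>y. (F y + c *\<^sub>R G y) \<bullet> i) x = F' i \<bullet> i + c * (G' i \<bullet> i)"
    by (rule pd_eq) (auto intro!: derivative_eq_intros hF hG simp: inner_add_left)
  moreover have "\<And>i. pd i (\<lambda>y. F y \<bullet> i) x = F' i \<bullet> i"
    by (rule pd_eq) (auto intro!: derivative_eq_intros hF)
  moreover have "\<And>i. pd i (\<lambda>y. G y \<bullet> i) x = G' i \<bullet> i"
    by (rule pd_eq) (auto intro!: derivative_eq_intros hG)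
  ultimately show ?thesis unfolding divg_def by (simp add: sum.distrib sum_distrib_left)
qed

lemma norm_shift: "(norm (a + c *\<^sub>R b))\<^sup>2 = (norm a)\<^sup>2 + 2 * c * (a \<bullet> b) + c\<^sup>2 * (norm b)\<^sup>2"
  unfolding power2_norm_eq_inner by (simp add: inner_add_left inner_add_right inner_commute algebra_simps power2_eq_square)

lemma slice:
  fixes q :: "'a::euclidean_space \<Rightarrow> real" and W W' :: "'a \<Rightarrow> 'a"
  assumes pos: "\<forall>x. q x > 0" and dq: "\<forall>x. q differentiable (at x)"
    and dpd: "\<forall>i\<in>Basis. \<forall>x. pd i q differentiable (at x)"
    and dW: "\<forall>x. (\<lambda>y. q y *\<^sub>R W y) differentiable (at x)"
    and W': "\<forall>y. W' y = W y + c *\<^sub>R grad (\<lambda>z. ln (q z)) y"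
  shows "\<forall>x. (\<lambda>y. q y *\<^sub>R W' y) differentiable (at x)"
    and "\<And>x. divg (\<lambda>y. q y *\<^sub>R W' y) x = divg (\<lambda>y. q y *\<^sub>R W y) x + c * lap q x"
proof -
  have eq: "(\<lambda>y. q y *\<^sub>R W' y) = (\<lambda>y. q y *\<^sub>R W y + c *\<^sub>R grad q y)"
  proof
    fix y
    have "q y *\<^sub>R grad (\<lambda>z. ln (q z)) y = grad q y"
      using fun_cong[OF score_eq[OF pos dq], of y] by simp
    then have "c *\<^sub>R (q y *\<^sub>R grad (\<lambda>z. ln (q z)) y) = c *\<^sub>R grad q y" by simp
    then show "q y *\<^sub>R W' y = q y *\<^sub>R W y + c *\<^sub>R grad q y"
      using W' by (simp add: scaleR_add_right mult.commute)
  qed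
  show "\<forall>x. (\<lambda>y. q y *\<^sub>R W' y) differentiable (at x)"
    unfolding eq using dW grad_differentiable[OF dpd]
    by (auto intro!: differentiable_add differentiable_scaleR)
  show "divg (\<lambda>y. q y *\<^sub>R W' y) x = divg (\<lambda>y. q y *\<^sub>R W y) x + c * lap q x" for x
    unfolding eq
    using divg_lin[OF dW[rule_format] grad_differentiable[OF dpd], where c=c] divg_grad[OF dpd]
    by simp
qed

lemma regular_shift:
  fixes p :: "'a::euclidean_space \<Rightarrow> real \<Rightarrow> real" and w w' :: "'a \<Rightarrow> real \<Rightarrow> 'a"
  assumes R: "regular \<sigma> p w g" and k: "continuous_on {0..1} k"
    and w': "\<And>x t. w' x t = w x t + k t *\<^sub>R score p x t"
  shows "regular \<sigma> p w' g"
    and "\<And>t x. t \<in> {0..1} \<Longrightarrow> divg (\<lambda>y. p y t *\<^sub>R w' y t) x = divg (\<lambda>y. p y t *\<^sub>R w y t) x + k t * lap (\<lambda>y. p y t) x"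
proof -
  have S: "(\<forall>x. (\<lambda>y. p y t *\<^sub>R w' y t) differentiable (at x)) \<and>
     (\<forall>x. divg (\<lambda>y. p y t *\<^sub>R w' y t) x = divg (\<lambda>y. p y t *\<^sub>R w y t) x + k t * lap (\<lambda>y. p y t) x)"
    if t: "t \<in> {0..1}" for t
  proof -
    have pos: "\<forall>x. p x t > 0" using R t unfolding regular_def by blast
    have dq: "\<forall>x. (\<lambda>y. p y t) differentiable (at x)" using R t unfolding regular_def by blast
    have dpd: "\<forall>i\<in>Basis. \<forall>x. pd i (\<lambda>z. p z t) differentiable (at x)" using R t unfolding regular_def by blast
    have dW: "\<forall>x. (\<lambda>y. p y t *\<^sub>R w y t) differentiable (at x)" using R t unfolding regular_def by blast
    have W': "\<forall>y. w' y t = w y t + k t *\<^sub>R grad (\<lambda>z. ln (p z t)) y" using w' by (simp add: score_def)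
    from slice[OF pos dq dpd dW W'] show ?thesis by blast
  qed
  show "divg (\<lambda>y. p y t *\<^sub>R w' y t) x = divg (\<lambda>y. p y t *\<^sub>R w y t) x + k t * lap (\<lambda>y. p y t) x"
    if "t \<in> {0..1}" for t x using S[OF that] by blast
  have e1: "(\<lambda>x. p x t * (norm (w' x t))\<^sup>2) = (\<lambda>x. p x t * (norm (w x t))\<^sup>2 + (2 * k t) * (p x t * (w x t \<bullet> score p x t)) + (k t)\<^sup>2 * (p x t * (norm (score p x t))\<^sup>2))" for t
    by (rule ext) (simp add: w' norm_shift algebra_simps)
  have e2: "(\<lambda>x. p x t * (w' x t \<bullet> score p x t)) = (\<lambda>x. p x t * (w x t \<bullet> score p x t) + k t * (p x t * (norm (score p x t))\<^sup>2))" for t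
    by (rule ext) (simp add: w' inner_add_left power2_norm_eq_inner algebra_simps)
  have T: "integrable lborel (\<lambda>x. p x t * (norm (w' x t))\<^sup>2) \<and>
      integrable lborel (\<lambda>x. p x t * (w' x t \<bullet> score p x t)) \<and>
      integrable lborel (\<lambda>x. divg (\<lambda>y. p y t *\<^sub>R w' y t) x * (1 + ln (p x t))) \<and>
      (LINT x|lborel. divg (\<lambda>y. p y t *\<^sub>R w' y t) x * (1 + ln (p x t)))
        = - (LINT x|lborel. p x t * (w' x t \<bullet> score p x t)) \<and>
      (LINT x|lborel. p x t * (norm (w' x t))\<^sup>2) = (LINT x|lborel. p x t * (norm (w x t))\<^sup>2) + (2 * k t) * (LINT x|lborel. p x t * (w x t \<bullet> score p x t)) + (k t)\<^sup>2 * (LINT x|lborel. p x t * (norm (score p x t))\<^sup>2) \<and>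
      (LINT x|lborel. p x t * (w' x t \<bullet> score p x t)) = (LINT x|lborel. p x t * (w x t \<bullet> score p x t)) + k t * (LINT x|lborel. p x t * (norm (score p x t))\<^sup>2)"
    if t: "t \<in> {0..1}" for t
  proof -
    have i1: "integrable lborel (\<lambda>x. p x t * (norm (w x t))\<^sup>2)" using R t unfolding regular_def by blast
    have i2: "integrable lborel (\<lambda>x. p x t * (norm (score p x t))\<^sup>2)" using R t unfolding regular_def by blast
    have i3: "integrable lborel (\<lambda>x. p x t * (w x t \<bullet> score p x t))" using R t unfolding regular_def by blast
    have i4: "integrable lborel (\<lambda>x. divg (\<lambda>y. p y t *\<^sub>R w y t) x * (1 + ln (p x t)))" using R t unfolding regular_def by blast
    have i5: "integrable lborel (\<lambda>x. lap (\<lambda>y. p y t) x * (1 + ln (p x t)))" using R t unfolding regular_def by blast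
    have ib1: "(LINT x|lborel. divg (\<lambda>y. p y t *\<^sub>R w y t) x * (1 + ln (p x t)))
        = - (LINT x|lborel. p x t * (w x t \<bullet> score p x t))" using R t unfolding regular_def by blast
    have ib2: "(LINT x|lborel. lap (\<lambda>y. p y t) x * (1 + ln (p x t)))
        = - (LINT x|lborel. p x t * (norm (score p x t))\<^sup>2)" using R t unfolding regular_def by blast
    have e3: "(\<lambda>x. divg (\<lambda>y. p y t *\<^sub>R w' y t) x * (1 + ln (p x t))) = (\<lambda>x. divg (\<lambda>y. p y t *\<^sub>R w y t) x * (1 + ln (p x t)) + k t * (lap (\<lambda>y. p y t) x * (1 + ln (p x t))))"
      using S[OF t] by (auto simp: algebra_simps)
    have I1: "integrable lborel (\<lambda>x. p x t * (norm (w' x t))\<^sup>2)"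
      unfolding e1 using i1 i2 i3 by auto
    have I2: "integrable lborel (\<lambda>x. p x t * (w' x t \<bullet> score p x t))"
      unfolding e2 using i2 i3 by auto
    have I3: "integrable lborel (\<lambda>x. divg (\<lambda>y. p y t *\<^sub>R w' y t) x * (1 + ln (p x t)))"
      unfolding e3 using i4 i5 by auto
    have L1: "(LINT x|lborel. p x t * (norm (w' x t))\<^sup>2) = (LINT x|lborel. p x t * (norm (w x t))\<^sup>2) + (2 * k t) * (LINT x|lborel. p x t * (w x t \<bullet> score p x t)) + (k t)\<^sup>2 * (LINT x|lborel. p x t * (norm (score p x t))\<^sup>2)"
      unfolding e1 using i1 i2 i3 by simp
    have L2: "(LINT x|lborel. p x t * (w' x t \<bullet> score p x t)) = (LINT x|lborel. p x t * (w x t \<bullet> score p x t)) + k t * (LINT x|lborel. p x t * (norm (score p x t))\<^sup>2)"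
      unfolding e2 using i2 i3 by simp
    have L3: "(LINT x|lborel. divg (\<lambda>y. p y t *\<^sub>R w' y t) x * (1 + ln (p x t)))
        = - (LINT x|lborel. p x t * (w' x t \<bullet> score p x t))"
      unfolding e3 L2 using i4 i5 ib1 ib2 by simp
    show ?thesis using I1 I2 I3 L1 L2 L3 by blast
  qed
  have k2: "continuous_on {0..1} (\<lambda>t. 2 * k t)" "continuous_on {0..1} (\<lambda>t. (k t)\<^sup>2)"
    using k by (auto intro!: continuous_intros)
  have ti1: "set_integrable lborel {0..1} (\<lambda>t. LINT x|lborel. p x t * (norm (w x t))\<^sup>2)"
    and ti2: "set_integrable lborel {0..1} (\<lambda>t. LINT x|lborel. p x t * (norm (score p x t))\<^sup>2)"
    and ti3: "set_integrable lborel {0..1} (\<lambda>t. LINT x|lborel. p x t * (w x t \<bullet> score p x t))"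
    using R unfolding regular_def by blast+
  have TI1: "set_integrable lborel {0..1} (\<lambda>t. LINT x|lborel. p x t * (norm (w' x t))\<^sup>2)"
  proof -
    have "set_integrable lborel {0..1} (\<lambda>t. (LINT x|lborel. p x t * (norm (w x t))\<^sup>2) + (2 * k t) * (LINT x|lborel. p x t * (w x t \<bullet> score p x t)) + (k t)\<^sup>2 * (LINT x|lborel. p x t * (norm (score p x t))\<^sup>2))"
      using ti1 set_integrable_cont_mult[OF ti3 k2(1)] set_integrable_cont_mult[OF ti2 k2(2)]
      by (intro set_integral_add(1)) auto
    then show ?thesis
      by (rule set_integrable_cong[THEN iffD1, rotated -1]) (use T in auto)
  qed
  have TI2: "set_integrable lborel {0..1} (\<lambda>t. LINT x|lborel. p x t * (w' x t \<bullet> score p x t))"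
  proof -
    have "set_integrable lborel {0..1} (\<lambda>t. (LINT x|lborel. p x t * (w x t \<bullet> score p x t)) + k t * (LINT x|lborel. p x t * (norm (score p x t))\<^sup>2))"
      using ti3 set_integrable_cont_mult[OF ti2 k]
      by (intro set_integral_add(1)) auto
    then show ?thesis
      by (rule set_integrable_cong[THEN iffD1, rotated -1]) (use T in auto)
  qed
  show "regular \<sigma> p w' g"
    unfolding regular_def
    apply (intro conjI ballI)
    subgoal using R unfolding regular_def by blast
    subgoal using R unfolding regular_def by blast
    subgoal using R unfolding regular_def by blast
    subgoal using R unfolding regular_def by blast
    subgoal using S by blast
    subgoal using T by blast
    subgoal using R unfolding regular_def by blast
    subgoal using T by blast
    subgoal using R unfolding regular_def by blast
    subgoal using R unfolding regular_def by blast
    subgoal using R unfolding regular_def by blast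
    subgoal using R unfolding regular_def by blast
    subgoal using T by blast
    subgoal using R unfolding regular_def by blast
    subgoal using T by blast
    subgoal using R unfolding regular_def by blast
    subgoal using R unfolding regular_def by blast
    subgoal using TI1 by blast
    subgoal using R unfolding regular_def by blast
    subgoal using TI2 by blast
    subgoal using R unfolding regular_def by blast
    subgoal using R unfolding regular_def by blast
    done
qed

lemma id1:
  fixes N bs s2 L G P D sg :: real
  shows "((1/2) * (N + 2 * (-((1/2) * sg\<^sup>2)) * bs + (-((1/2) * sg\<^sup>2))\<^sup>2 * s2) + sg^4/8 * s2 - sg\<^sup>2/2 * (1 + L) * G - (1/2) * D * L) * P
   = (1/2) * (P * N) + (-(sg\<^sup>2/2)) * (P * bs) + (sg^4/4) * (P * s2) + (-(sg\<^sup>2/2)) * (G * P) + (-(sg\<^sup>2/2)) * (G * P * L) + (-(1/2) * D) * (P * L)"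
  by (simp add: algebra_simps power2_eq_square power4_eq_xxxx)

lemma obj:
  fixes p :: "'a::euclidean_space \<Rightarrow> real \<Rightarrow> real" and b :: "'a \<Rightarrow> real \<Rightarrow> 'a"
  assumes sc: "continuous_on {0..1} \<sigma>"
    and sd: "\<forall>t\<in>{0..1}. \<sigma> differentiable (at t within {0..1})"
    and z: "(p,b,g) \<in> adm_ruot \<sigma> \<nu>0 \<nu>1"
  shows "(LINT t:{0..1}|lborel. LINT x|lborel. (1/2) * (norm (b x t))\<^sup>2 * p x t)
     = (LINT t:{0..1}|lborel. LINT x|lborel.
        ((1/2) * (norm (b x t - ((1/2) * (\<sigma> t)\<^sup>2) *\<^sub>R score p x t))\<^sup>2
         + (\<sigma> t)^4 / 8 * (norm (score p x t))\<^sup>2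
         - (\<sigma> t)\<^sup>2 / 2 * (1 + ln (p x t)) * g x t
         - (1/2) * dsig2 \<sigma> t * ln (p x t)) * p x t)
       + (1/2) * ((\<sigma> 1)\<^sup>2 * entropy \<nu>1 - (\<sigma> 0)\<^sup>2 * entropy \<nu>0)"
proof -
  have R: "regular \<sigma> p b g" and C: "common_adm \<nu>0 \<nu>1 p"
   and PDE: "\<forall>t\<in>{0..1}. \<forall>x. dt p x t = - divg (\<lambda>y. p y t *\<^sub>R b y t) x + (1/2) * (\<sigma> t)\<^sup>2 * lap (\<lambda>y. p y t) x + g x t * p x t"
    using z by (auto simp: adm_ruot_def)
  define A where "A t = (LINT x|lborel. p x t * (norm (b x t))\<^sup>2)" for t
  define Bs where "Bs t = (LINT x|lborel. p x t * (b x t \<bullet> score p x t))" for t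
  define S where "S t = (LINT x|lborel. p x t * (norm (score p x t))\<^sup>2)" for t
  define G where "G t = (LINT x|lborel. g x t * p x t * (1 + ln (p x t)))" for t
  define E where "E t = (LINT x|lborel. p x t * ln (p x t))" for t
  define F' where "F' t = dsig2 \<sigma> t * E t + (\<sigma> t)\<^sup>2 * Bs t - (\<sigma> t)^4/2 * S t + (\<sigma> t)\<^sup>2 * G t" for t
  have Gsplit: "G t = (LINT x|lborel. g x t * p x t) + (LINT x|lborel. g x t * p x t * ln (p x t))"
    if t: "t \<in> {0..1}" for t
  proof -
    have i1: "integrable lborel (\<lambda>x. g x t * p x t)" using R t unfolding regular_def by blast
    have i2: "integrable lborel (\<lambda>x. g x t * p x t * ln (p x t))" using R t unfolding regular_def by blast
    have "(\<lambda>x. g x t * p x t * (1 + ln (p x t))) = (\<lambda>x. g x t * p x t + g x t * p x t * ln (p x t))"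
      by (rule ext) (simp add: algebra_simps)
    then show ?thesis unfolding G_def using i1 i2 by simp
  qed
  have Cq: "(LINT x|lborel.
        ((1/2) * (norm (b x t - ((1/2) * (\<sigma> t)\<^sup>2) *\<^sub>R score p x t))\<^sup>2
         + (\<sigma> t)^4 / 8 * (norm (score p x t))\<^sup>2
         - (\<sigma> t)\<^sup>2 / 2 * (1 + ln (p x t)) * g x t
         - (1/2) * dsig2 \<sigma> t * ln (p x t)) * p x t) = (1/2) * A t - (1/2) * F' t"
    if t: "t \<in> {0..1}" for t
  proof -
    have i1: "integrable lborel (\<lambda>x. p x t * (norm (b x t))\<^sup>2)" using R t unfolding regular_def by blast
    have i2: "integrable lborel (\<lambda>x. p x t * (b x t \<bullet> score p x t))" using R t unfolding regular_def by blast
    have i3: "integrable lborel (\<lambda>x. p x t * (norm (score p x t))\<^sup>2)" using R t unfolding regular_def by blast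
    have i4: "integrable lborel (\<lambda>x. g x t * p x t)" using R t unfolding regular_def by blast
    have i5: "integrable lborel (\<lambda>x. g x t * p x t * ln (p x t))" using R t unfolding regular_def by blast
    have i6: "integrable lborel (\<lambda>x. p x t * ln (p x t))" using R t unfolding regular_def by blast
    have nsh: "(norm (b x t - ((1/2) * (\<sigma> t)\<^sup>2) *\<^sub>R score p x t))\<^sup>2 = (norm (b x t))\<^sup>2 + 2 * (-((1/2) * (\<sigma> t)\<^sup>2)) * (b x t \<bullet> score p x t) + (-((1/2) * (\<sigma> t)\<^sup>2))\<^sup>2 * (norm (score p x t))\<^sup>2" for x
      using norm_shift[of "b x t" "-((1/2) * (\<sigma> t)\<^sup>2)" "score p x t"] by simp
    have eq: "(\<lambda>x. ((1/2) * (norm (b x t - ((1/2) * (\<sigma> t)\<^sup>2) *\<^sub>R score p x t))\<^sup>2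
         + (\<sigma> t)^4 / 8 * (norm (score p x t))\<^sup>2
         - (\<sigma> t)\<^sup>2 / 2 * (1 + ln (p x t)) * g x t
         - (1/2) * dsig2 \<sigma> t * ln (p x t)) * p x t) =
      (\<lambda>x. (1/2) * (p x t * (norm (b x t))\<^sup>2) + (-((\<sigma> t)\<^sup>2/2)) * (p x t * (b x t \<bullet> score p x t))
         + ((\<sigma> t)^4/4) * (p x t * (norm (score p x t))\<^sup>2) + (-((\<sigma> t)\<^sup>2/2)) * (g x t * p x t)
         + (-((\<sigma> t)\<^sup>2/2)) * (g x t * p x t * ln (p x t)) + (-(1/2) * dsig2 \<sigma> t) * (p x t * ln (p x t)))"
      by (rule ext, subst nsh, rule id1)
    have L: "(LINT x|lborel. (1/2) * (p x t * (norm (b x t))\<^sup>2) + (-((\<sigma> t)\<^sup>2/2)) * (p x t * (b x t \<bullet> score p x t))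
         + ((\<sigma> t)^4/4) * (p x t * (norm (score p x t))\<^sup>2) + (-((\<sigma> t)\<^sup>2/2)) * (g x t * p x t)
         + (-((\<sigma> t)\<^sup>2/2)) * (g x t * p x t * ln (p x t)) + (-(1/2) * dsig2 \<sigma> t) * (p x t * ln (p x t)))
      = (1/2) * A t + (-((\<sigma> t)\<^sup>2/2)) * Bs t + ((\<sigma> t)^4/4) * S t + (-((\<sigma> t)\<^sup>2/2)) * (LINT x|lborel. g x t * p x t)
         + (-((\<sigma> t)\<^sup>2/2)) * (LINT x|lborel. g x t * p x t * ln (p x t)) + (-(1/2) * dsig2 \<sigma> t) * E t"
      unfolding A_def Bs_def S_def E_def using i1 i2 i3 i4 i5 i6 by simp
    show ?thesis unfolding eq L using Gsplit[OF t]
      by (simp add: F'_def algebra_simps)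
  qed
  have Fd: "((\<lambda>s. (\<sigma> s)\<^sup>2 * E s) has_vector_derivative F' t) (at t within {0..1})"
    if t: "t \<in> {0..1}" for t
  proof -
    have "(\<lambda>s. (\<sigma> s)\<^sup>2) differentiable (at t within {0..1})"
      using sd t by (auto intro!: differentiable_power)
    then have d1: "((\<lambda>s. (\<sigma> s)\<^sup>2) has_real_derivative dsig2 \<sigma> t) (at t within {0..1})"
      unfolding dsig2_def has_real_derivative_iff_has_vector_derivative
      by (rule vector_derivative_works[THEN iffD1])
    have d2: "(E has_real_derivative (LINT x|lborel. dt p x t * (1 + ln (p x t)))) (at t within {0..1})"
      using R t unfolding regular_def E_def by blast
    have i4: "integrable lborel (\<lambda>x. g x t * p x t)" using R t unfolding regular_def by blast
    have i5: "integrable lborel (\<lambda>x. g x t * p x t * ln (p x t))" using R t unfolding regular_def by blast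
    have i7: "integrable lborel (\<lambda>x. divg (\<lambda>y. p y t *\<^sub>R b y t) x * (1 + ln (p x t)))" using R t unfolding regular_def by blast
    have i8: "integrable lborel (\<lambda>x. lap (\<lambda>y. p y t) x * (1 + ln (p x t)))" using R t unfolding regular_def by blast
    have ib1: "(LINT x|lborel. divg (\<lambda>y. p y t *\<^sub>R b y t) x * (1 + ln (p x t)))
        = - Bs t" using R t unfolding regular_def Bs_def by blast
    have ib2: "(LINT x|lborel. lap (\<lambda>y. p y t) x * (1 + ln (p x t)))
        = - S t" using R t unfolding regular_def S_def by blast
    have eq: "(\<lambda>x. dt p x t * (1 + ln (p x t))) = (\<lambda>x. - (divg (\<lambda>y. p y t *\<^sub>R b y t) x * (1 + ln (p x t)))
        + ((1/2) * (\<sigma> t)\<^sup>2) * (lap (\<lambda>y. p y t) x * (1 + ln (p x t))) + (g x t * p x t + g x t * p x t * ln (p x t)))"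
      by (rule ext) (simp add: PDE[rule_format, OF t] algebra_simps)
    have EE: "(LINT x|lborel. dt p x t * (1 + ln (p x t))) = Bs t - (\<sigma> t)\<^sup>2/2 * S t + G t"
      unfolding eq using i4 i5 i7 i8 ib1 ib2 Gsplit[OF t] by simp
    have "dsig2 \<sigma> t * E t + (LINT x|lborel. dt p x t * (1 + ln (p x t))) * (\<sigma> t)\<^sup>2 = F' t"
      unfolding EE F'_def by (simp add: algebra_simps power2_eq_square power4_eq_xxxx)
    then have "((\<lambda>s. (\<sigma> s)\<^sup>2 * E s) has_real_derivative F' t) (at t within {0..1})"
      by (rule DERIV_cong[OF DERIV_mult[OF d1 d2]])
    then show ?thesis by (simp add: has_real_derivative_iff_has_vector_derivative)
  qed
  have FTC: "(F' has_integral ((\<sigma> 1)\<^sup>2 * E 1 - (\<sigma> 0)\<^sup>2 * E 0)) {0..1}"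
    using fundamental_theorem_of_calculus[of 0 1 "\<lambda>s. (\<sigma> s)\<^sup>2 * E s" F'] Fd by simp
  have s2c: "continuous_on {0..1} (\<lambda>t. (\<sigma> t)\<^sup>2)" and s4c: "continuous_on {0..1} (\<lambda>t. (\<sigma> t)^4/2)"
    using sc by (auto intro!: continuous_intros)
  have tB: "set_integrable lborel {0..1} Bs" using R unfolding regular_def Bs_def by blast
  have tS: "set_integrable lborel {0..1} S" using R unfolding regular_def S_def by blast
  have tG: "set_integrable lborel {0..1} G" using R unfolding regular_def G_def by blast
  have tE: "set_integrable lborel {0..1} (\<lambda>t. dsig2 \<sigma> t * E t)" using R unfolding regular_def E_def by blast
  have tA: "set_integrable lborel {0..1} A" using R unfolding regular_def A_def by blast
  have tF: "set_integrable lborel {0..1} F'"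
    unfolding F'_def
    using tE set_integrable_cont_mult[OF tB s2c] set_integrable_cont_mult[OF tS s4c] set_integrable_cont_mult[OF tG s2c]
    by (intro set_integral_add(1) set_integral_diff(1)) auto
  have LF: "(LINT t:{0..1}|lborel. F' t) = (\<sigma> 1)\<^sup>2 * E 1 - (\<sigma> 0)\<^sup>2 * E 0"
    using set_borel_integral_eq_integral(2)[OF tF] integral_unique[OF FTC] by simp
  have lhs: "(LINT t:{0..1}|lborel. LINT x|lborel. (1/2) * (norm (b x t))\<^sup>2 * p x t) = (1/2) * (LINT t:{0..1}|lborel. A t)"
  proof -
    have "\<And>t. (\<lambda>x. (1/2) * (norm (b x t))\<^sup>2 * p x t) = (\<lambda>x. (1/2) * (p x t * (norm (b x t))\<^sup>2))"
      by (rule ext) (simp add: mult_ac)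
    then show ?thesis by (simp add: A_def)
  qed
  have rhs: "(LINT t:{0..1}|lborel. LINT x|lborel.
        ((1/2) * (norm (b x t - ((1/2) * (\<sigma> t)\<^sup>2) *\<^sub>R score p x t))\<^sup>2
         + (\<sigma> t)^4 / 8 * (norm (score p x t))\<^sup>2
         - (\<sigma> t)\<^sup>2 / 2 * (1 + ln (p x t)) * g x t
         - (1/2) * dsig2 \<sigma> t * ln (p x t)) * p x t) = (LINT t:{0..1}|lborel. (1/2) * A t - (1/2) * F' t)"
    by (rule set_lebesgue_integral_cong) (simp, blast intro: Cq)
  also have "\<dots> = (1/2) * (LINT t:{0..1}|lborel. A t) - (1/2) * (LINT t:{0..1}|lborel. F' t)"
    using tA tF by (simp add: set_integral_diff(2))
  finally have rhs': "(LINT t:{0..1}|lborel. LINT x|lborel.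
        ((1/2) * (norm (b x t - ((1/2) * (\<sigma> t)\<^sup>2) *\<^sub>R score p x t))\<^sup>2
         + (\<sigma> t)^4 / 8 * (norm (score p x t))\<^sup>2
         - (\<sigma> t)\<^sup>2 / 2 * (1 + ln (p x t)) * g x t
         - (1/2) * dsig2 \<sigma> t * ln (p x t)) * p x t) = (1/2) * (LINT t:{0..1}|lborel. A t) - (1/2) * (LINT t:{0..1}|lborel. F' t)" .
  have E1: "E 1 = entropy \<nu>1" and E0: "E 0 = entropy \<nu>0"
    using C unfolding common_adm_def E_def entropy_def by auto
  show ?thesis unfolding lhs rhs' LF E1 E0 by (simp add: algebra_simps)
qed


lemma lin1: "(a::real) = - d + c * l + gg \<Longrightarrow> d' = d + (- c) * l \<Longrightarrow> a = - d' + gg"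
  by simp
lemma lin2: "(a::real) = - d + gg \<Longrightarrow> d' = d + c * l \<Longrightarrow> a = - d' + c * l + gg"
  by simp

lemma ereal_shift: "ereal (x + k) + P = ereal x + P + ereal k"
  by (metis add.assoc add.commute plus_ereal.simps(1))

lemma to_v_in:
  assumes sc: "continuous_on {0..1} \<sigma>" and z: "(p,b,g) \<in> adm_ruot \<sigma> \<nu>0 \<nu>1"
  shows "to_v \<sigma> (p,b,g) \<in> adm_ce \<sigma> \<nu>0 \<nu>1"
proof -
  have R: "regular \<sigma> p b g" and C: "common_adm \<nu>0 \<nu>1 p"
   and PDE: "\<forall>t\<in>{0..1}. \<forall>x. dt p x t = - divg (\<lambda>y. p y t *\<^sub>R b y t) x + (1/2) * (\<sigma> t)\<^sup>2 * lap (\<lambda>y. p y t) x + g x t * p x t"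
    using z by (auto simp: adm_ruot_def)
  have k: "continuous_on {0..1} (\<lambda>t. - ((1/2) * (\<sigma> t)\<^sup>2))" using sc by (auto intro!: continuous_intros)
  have w': "\<And>x t. b x t - ((1/2) * (\<sigma> t)\<^sup>2) *\<^sub>R score p x t = b x t + (- ((1/2) * (\<sigma> t)\<^sup>2)) *\<^sub>R score p x t"
    by simp
  note RS = regular_shift[OF R k w']
  have P2: "\<forall>t\<in>{0..1}. \<forall>x. dt p x t = - divg (\<lambda>y. p y t *\<^sub>R (b y t - ((1/2) * (\<sigma> t)\<^sup>2) *\<^sub>R score p y t)) x + g x t * p x t"
  proof (intro ballI allI)
    fix t :: real and x assume t: "t \<in> {0..1}"
    show "dt p x t = - divg (\<lambda>y. p y t *\<^sub>R (b y t - ((1/2) * (\<sigma> t)\<^sup>2) *\<^sub>R score p y t)) x + g x t * p x t"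
      by (rule lin1[OF PDE[rule_format, OF t, of x] RS(2)[OF t, of x]])
  qed
  show ?thesis
    unfolding to_v_def adm_ce_def using C RS(1) P2 by simp
qed

lemma to_v_surj:
  assumes sc: "continuous_on {0..1} \<sigma>" and z: "(p,v,g) \<in> adm_ce \<sigma> \<nu>0 \<nu>1"
  shows "(p, \<lambda>x t. v x t + ((1/2) * (\<sigma> t)\<^sup>2) *\<^sub>R score p x t, g) \<in> adm_ruot \<sigma> \<nu>0 \<nu>1"
    and "to_v \<sigma> (p, \<lambda>x t. v x t + ((1/2) * (\<sigma> t)\<^sup>2) *\<^sub>R score p x t, g) = (p,v,g)"
proof -
  have R: "regular \<sigma> p v g" and C: "common_adm \<nu>0 \<nu>1 p"
   and PDE: "\<forall>t\<in>{0..1}. \<forall>x. dt p x t = - divg (\<lambda>y. p y t *\<^sub>R v y t) x + g x t * p x t"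
    using z by (auto simp: adm_ce_def)
  have k: "continuous_on {0..1} (\<lambda>t. (1/2) * (\<sigma> t)\<^sup>2)" using sc by (auto intro!: continuous_intros)
  have w': "\<And>x t. v x t + ((1/2) * (\<sigma> t)\<^sup>2) *\<^sub>R score p x t = v x t + ((1/2) * (\<sigma> t)\<^sup>2) *\<^sub>R score p x t"
    by simp
  note RS = regular_shift[OF R k w']
  have P2: "\<forall>t\<in>{0..1}. \<forall>x. dt p x t = - divg (\<lambda>y. p y t *\<^sub>R (v y t + ((1/2) * (\<sigma> t)\<^sup>2) *\<^sub>R score p y t)) x + (1/2) * (\<sigma> t)\<^sup>2 * lap (\<lambda>y. p y t) x + g x t * p x t"
  proof (intro ballI allI)
    fix t :: real and x assume t: "t \<in> {0..1}"
    show "dt p x t = - divg (\<lambda>y. p y t *\<^sub>R (v y t + ((1/2) * (\<sigma> t)\<^sup>2) *\<^sub>R score p y t)) x + (1/2) * (\<sigma> t)\<^sup>2 * lap (\<lambda>y. p y t) x + g x t * p x t"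
      by (rule lin2[OF PDE[rule_format, OF t, of x] RS(2)[OF t, of x]])
  qed
  show "(p, \<lambda>x t. v x t + ((1/2) * (\<sigma> t)\<^sup>2) *\<^sub>R score p x t, g) \<in> adm_ruot \<sigma> \<nu>0 \<nu>1"
    unfolding adm_ruot_def using C RS(1) P2 by simp
  show "to_v \<sigma> (p, \<lambda>x t. v x t + ((1/2) * (\<sigma> t)\<^sup>2) *\<^sub>R score p x t, g) = (p,v,g)"
    unfolding to_v_def by simp
qed

lemma to_v_inj: "inj (to_v \<sigma>)"
proof (rule injI)
  fix z z' assume h: "to_v \<sigma> z = to_v \<sigma> z'"
  obtain p b g where z: "z = (p,b,g)" by (cases z) auto
  obtain p' b' g' where z': "z' = (p',b',g')" by (cases z') auto
  from h have "p = p' \<and> g = g' \<and> (\<lambda>x t. b x t - ((1/2) * (\<sigma> t)\<^sup>2) *\<^sub>R score p x t) = (\<lambda>x t. b' x t - ((1/2) * (\<sigma> t)\<^sup>2) *\<^sub>R score p' x t)"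
    unfolding z z' to_v_def by auto
  then have "p = p'" "g = g'" and bb: "(\<lambda>x t. b x t - ((1/2) * (\<sigma> t)\<^sup>2) *\<^sub>R score p x t) = (\<lambda>x t. b' x t - ((1/2) * (\<sigma> t)\<^sup>2) *\<^sub>R score p' x t)"
    by blast+
  moreover have "b = b'"
  proof (intro ext)
    fix x t
    show "b x t = b' x t" using fun_cong[OF fun_cong[OF bb, of x], of t] \<open>p = p'\<close> by simp
  qed
  ultimately show "z = z'" using z z' by simp
qed

theorem theorem2:
  fixes \<nu>0 \<nu>1 :: "'a::euclidean_space \<Rightarrow> real"
    and \<sigma> :: "real \<Rightarrow> real" and \<alpha> :: real and \<Psi> :: "real \<Rightarrow> ennreal"
  assumes "\<forall>x. \<nu>0 x \<ge> 0" and "\<forall>x. \<nu>1 x \<ge> 0"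
    and "\<forall>t\<in>{0..1}. \<sigma> t > 0"
    and "\<forall>t\<in>{0..1}. \<sigma> differentiable (at t within {0..1})"
    and "\<alpha> > 0"
  shows "bij_betw (to_v \<sigma>) (adm_ruot \<sigma> \<nu>0 \<nu>1) (adm_ce \<sigma> \<nu>0 \<nu>1)
    \<and> (\<forall>z\<in>adm_ruot \<sigma> \<nu>0 \<nu>1.
         J_ruot \<alpha> \<Psi> z = J_ce \<sigma> \<alpha> \<Psi> (to_v \<sigma> z)
           + ereal ((1/2) * ((\<sigma> 1)\<^sup>2 * entropy \<nu>1 - (\<sigma> 0)\<^sup>2 * entropy \<nu>0)))
    \<and> (\<forall>z\<in>adm_ruot \<sigma> \<nu>0 \<nu>1.
         (\<forall>z'\<in>adm_ruot \<sigma> \<nu>0 \<nu>1. J_ruot \<alpha> \<Psi> z \<le> J_ruot \<alpha> \<Psi> z') \<longleftrightarrow>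
         (\<forall>w\<in>adm_ce \<sigma> \<nu>0 \<nu>1. J_ce \<sigma> \<alpha> \<Psi> (to_v \<sigma> z) \<le> J_ce \<sigma> \<alpha> \<Psi> w))"
proof -
  have sc: "continuous_on {0..1} \<sigma>"
    using assms(4) by (intro differentiable_imp_continuous_on) (simp add: differentiable_on_def)
  define K where "K = (1/2) * ((\<sigma> 1)\<^sup>2 * entropy \<nu>1 - (\<sigma> 0)\<^sup>2 * entropy \<nu>0)"
  have img: "to_v \<sigma> ` adm_ruot \<sigma> \<nu>0 \<nu>1 = adm_ce \<sigma> \<nu>0 \<nu>1"
  proof
    show "to_v \<sigma> ` adm_ruot \<sigma> \<nu>0 \<nu>1 \<subseteq> adm_ce \<sigma> \<nu>0 \<nu>1"
    proof
      fix w assume "w \<in> to_v \<sigma> ` adm_ruot \<sigma> \<nu>0 \<nu>1"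
      then obtain z where z: "z \<in> adm_ruot \<sigma> \<nu>0 \<nu>1" and wz: "w = to_v \<sigma> z" by blast
      obtain p b g where zz: "z = (p,b,g)" by (cases z) auto
      show "w \<in> adm_ce \<sigma> \<nu>0 \<nu>1" unfolding wz zz by (rule to_v_in[OF sc z[unfolded zz]])
    qed
    show "adm_ce \<sigma> \<nu>0 \<nu>1 \<subseteq> to_v \<sigma> ` adm_ruot \<sigma> \<nu>0 \<nu>1"
    proof
      fix w assume w: "w \<in> adm_ce \<sigma> \<nu>0 \<nu>1"
      obtain p v g where wv: "w = (p,v,g)" by (cases w) auto
      note m = to_v_surj(1)[OF sc w[unfolded wv]]
      note e = to_v_surj(2)[OF sc w[unfolded wv]]
      show "w \<in> to_v \<sigma> ` adm_ruot \<sigma> \<nu>0 \<nu>1"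
        unfolding wv by (rule image_eqI[where f="to_v \<sigma>", OF e[symmetric] m])
    qed
  qed
  have bij: "bij_betw (to_v \<sigma>) (adm_ruot \<sigma> \<nu>0 \<nu>1) (adm_ce \<sigma> \<nu>0 \<nu>1)"
    unfolding bij_betw_def using img to_v_inj by (auto intro: inj_on_subset)
  have J: "J_ruot \<alpha> \<Psi> z = J_ce \<sigma> \<alpha> \<Psi> (to_v \<sigma> z) + ereal K" if z: "z \<in> adm_ruot \<sigma> \<nu>0 \<nu>1" for z
  proof -
    obtain p b g where zz: "z = (p,b,g)" by (cases z) auto
    have O: "(LINT t:{0..1}|lborel. LINT x|lborel. (1/2) * (norm (b x t))\<^sup>2 * p x t)
     = (LINT t:{0..1}|lborel. LINT x|lborel.
        ((1/2) * (norm (b x t - ((1/2) * (\<sigma> t)\<^sup>2) *\<^sub>R score p x t))\<^sup>2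
         + (\<sigma> t)^4 / 8 * (norm (score p x t))\<^sup>2
         - (\<sigma> t)\<^sup>2 / 2 * (1 + ln (p x t)) * g x t
         - (1/2) * dsig2 \<sigma> t * ln (p x t)) * p x t) + K"
      using obj[OF sc assms(4) z[unfolded zz]] unfolding K_def .
    show ?thesis unfolding zz J_ruot_def J_ce_def to_v_def prod.case O
      by (rule ereal_shift)
  qed
  have min: "(\<forall>z'\<in>adm_ruot \<sigma> \<nu>0 \<nu>1. J_ruot \<alpha> \<Psi> z \<le> J_ruot \<alpha> \<Psi> z') \<longleftrightarrow>
         (\<forall>w\<in>adm_ce \<sigma> \<nu>0 \<nu>1. J_ce \<sigma> \<alpha> \<Psi> (to_v \<sigma> z) \<le> J_ce \<sigma> \<alpha> \<Psi> w)"
    if z: "z \<in> adm_ruot \<sigma> \<nu>0 \<nu>1" for z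
  proof -
    have "(\<forall>z'\<in>adm_ruot \<sigma> \<nu>0 \<nu>1. J_ruot \<alpha> \<Psi> z \<le> J_ruot \<alpha> \<Psi> z') \<longleftrightarrow>
          (\<forall>z'\<in>adm_ruot \<sigma> \<nu>0 \<nu>1. J_ce \<sigma> \<alpha> \<Psi> (to_v \<sigma> z) \<le> J_ce \<sigma> \<alpha> \<Psi> (to_v \<sigma> z'))"
      using J z by (simp add: ereal_add_le_add_iff2)
    also have "\<dots> \<longleftrightarrow> (\<forall>w\<in>to_v \<sigma> ` adm_ruot \<sigma> \<nu>0 \<nu>1. J_ce \<sigma> \<alpha> \<Psi> (to_v \<sigma> z) \<le> J_ce \<sigma> \<alpha> \<Psi> w)"
      by blast
    finally show ?thesis unfolding img .
  qed
  show ?thesis using bij J min unfolding K_def by blast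
qed

end
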